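(* Let $F$ be a field of characteristic not $2$, $D$ a division quaternion algebra over $F$, and let $G=D^\times\times D^\times\times\mathrm{GL}_2$ act on $V=D\oplus D$ by $(x,y)\cdot\rho(g_1,g_2,g_3)=(g_1^{-1}xg_2,\,g_1^{-1}yg_2)g_3$. Then there are exactly two singular $G(F)$-orbits in $V(F)$ (orbits of elements $x$ with $P(x)=0$): the orbit of $(0,0)$ and the orbit of $(0,1)$.
   Context: Here $(x,y)g_3$ for $g_3=\left(\begin{smallmatrix}a&b\\c&d\end{smallmatrix}\right)$ means $(ax+cy,\,bx+dy)$. $x\mapsto x^\iota$ is the standard involution of $D$, and $P(x,y)=-\mathrm{Nrd}(xy^\iota-yx^\iota)$, where $\mathrm{Nrd}(z)=zz^\iota$ is the reduced norm. *)

theory Defs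
  imports Main
begin

text \<open>Quaternion algebra (a,b)_F over a field F (char not 2), with basis 1,i,j,k,
  i^2 = a, j^2 = b, k = ij = -ji. Elements are coordinate 4-tuples.\<close>

datatype 'f quat = Quat 'f 'f 'f 'f

fun qmul :: "'f::field \<Rightarrow> 'f \<Rightarrow> 'f quat \<Rightarrow> 'f quat \<Rightarrow> 'f quat" where
  "qmul a b (Quat x0 x1 x2 x3) (Quat y0 y1 y2 y3) =
     Quat (x0*y0 + a*x1*y1 + b*x2*y2 - a*b*x3*y3)
          (x0*y1 + x1*y0 - b*x2*y3 + b*x3*y2)
          (x0*y2 + x2*y0 + a*x1*y3 - a*x3*y1)
          (x0*y3 + x3*y0 + x1*y2 - x2*y1)"

fun qadd :: "'f::field quat \<Rightarrow> 'f quat \<Rightarrow> 'f quat" where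
  "qadd (Quat x0 x1 x2 x3) (Quat y0 y1 y2 y3) = Quat (x0+y0) (x1+y1) (x2+y2) (x3+y3)"

fun qsub :: "'f::field quat \<Rightarrow> 'f quat \<Rightarrow> 'f quat" where
  "qsub (Quat x0 x1 x2 x3) (Quat y0 y1 y2 y3) = Quat (x0-y0) (x1-y1) (x2-y2) (x3-y3)"

fun qscale :: "'f::field \<Rightarrow> 'f quat \<Rightarrow> 'f quat" where
  "qscale c (Quat x0 x1 x2 x3) = Quat (c*x0) (c*x1) (c*x2) (c*x3)"

definition qzero :: "'f::field quat" where "qzero = Quat 0 0 0 0"
definition qone :: "'f::field quat" where "qone = Quat 1 0 0 0"

fun qconj :: "'f::field quat \<Rightarrow> 'f quat" where
  "qconj (Quat x0 x1 x2 x3) = Quat x0 (-x1) (-x2) (-x3)"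

text \<open>Reduced norm Nrd(z) = z z^\<iota> (a scalar; we take its 1-coordinate).\<close>
fun scalar_part :: "'f quat \<Rightarrow> 'f" where
  "scalar_part (Quat x0 _ _ _) = x0"

definition nrd :: "'f::field \<Rightarrow> 'f \<Rightarrow> 'f quat \<Rightarrow> 'f" where
  "nrd a b z = scalar_part (qmul a b z (qconj z))"

definition is_division :: "'f::field \<Rightarrow> 'f \<Rightarrow> bool" where
  "is_division a b \<longleftrightarrow> (\<forall>z. z \<noteq> qzero \<longrightarrow> (\<exists>w. qmul a b z w = qone \<and> qmul a b w z = qone))"

definition qunits :: "'f::field \<Rightarrow> 'f \<Rightarrow> 'f quat set" where
  "qunits a b = {z. \<exists>w. qmul a b z w = qone \<and> qmul a b w z = qone}"

definition qinv :: "'f::field \<Rightarrow> 'f \<Rightarrow> 'f quat \<Rightarrow> 'f quat" where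
  "qinv a b z = (SOME w. qmul a b z w = qone \<and> qmul a b w z = qone)"

text \<open>GL_2(F): matrices (p,q,r,s) = [[p,q],[r,s]] with nonzero determinant.\<close>
definition GL2 :: "('f::field \<times> 'f \<times> 'f \<times> 'f) set" where
  "GL2 = {(p,q,r,s). p*s - q*r \<noteq> 0}"

text \<open>(x,y)\<cdot>\<rho>(g1,g2,g3) = (g1^{-1} x g2, g1^{-1} y g2) g3, where
  (x,y)[[p,q],[r,s]] = (p x + r y, q x + s y).\<close>
definition act :: "'f::field \<Rightarrow> 'f \<Rightarrow> 'f quat \<times> 'f quat \<Rightarrow> 'f quat \<Rightarrow> 'f quat
                    \<Rightarrow> 'f \<times> 'f \<times> 'f \<times> 'f \<Rightarrow> 'f quat \<times> 'f quat" where
  "act a b v g1 g2 g3 =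
     (let x' = qmul a b (qmul a b (qinv a b g1) (fst v)) g2;
          y' = qmul a b (qmul a b (qinv a b g1) (snd v)) g2;
          (p,q,r,s) = g3
      in (qadd (qscale p x') (qscale r y'), qadd (qscale q x') (qscale s y')))"

definition orbit :: "'f::field \<Rightarrow> 'f \<Rightarrow> 'f quat \<times> 'f quat \<Rightarrow> ('f quat \<times> 'f quat) set" where
  "orbit a b v = {act a b v g1 g2 g3 | g1 g2 g3.
                    g1 \<in> qunits a b \<and> g2 \<in> qunits a b \<and> g3 \<in> GL2}"

definition Pform :: "'f::field \<Rightarrow> 'f \<Rightarrow> 'f quat \<times> 'f quat \<Rightarrow> 'f" where
  "Pform a b v = - nrd a b (qsub (qmul a b (fst v) (qconj (snd v)))
                                 (qmul a b (snd v) (qconj (fst v))))"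

end

theory Submission
  imports Defs
begin

lemma qmul_assoc: "qmul a b (qmul a b x y) z = qmul a b x (qmul a b y z)"
  by (cases x; cases y; cases z) (simp add: algebra_simps)

lemma qmul_one_left[simp]: "qmul a b qone x = x"
  by (cases x) (simp add: qone_def)
lemma qmul_one_right[simp]: "qmul a b x qone = x"
  by (cases x) (simp add: qone_def)
lemma qmul_zero_left[simp]: "qmul a b qzero x = qzero"
  by (cases x) (simp add: qzero_def)
lemma qmul_zero_right[simp]: "qmul a b x qzero = qzero"
  by (cases x) (simp add: qzero_def)
lemma qscale_zero[simp]: "qscale c qzero = qzero"
  by (simp add: qzero_def)
lemma qadd_zero[simp]: "qadd qzero qzero = qzero"
  by (simp add: qzero_def)

lemma qmul_add_left: "qmul a b (qadd x y) z = qadd (qmul a b x z) (qmul a b y z)"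
  by (cases x; cases y; cases z) (simp add: algebra_simps)
lemma qmul_add_right: "qmul a b z (qadd x y) = qadd (qmul a b z x) (qmul a b z y)"
  by (cases x; cases y; cases z) (simp add: algebra_simps)
lemma qmul_scale_left: "qmul a b (qscale c x) z = qscale c (qmul a b x z)"
  by (cases x; cases z) (simp add: algebra_simps)
lemma qmul_scale_right: "qmul a b z (qscale c x) = qscale c (qmul a b z x)"
  by (cases x; cases z) (simp add: algebra_simps)

lemma qinv_props:
  assumes "z \<in> qunits a b"
  shows "qmul a b z (qinv a b z) = qone \<and> qmul a b (qinv a b z) z = qone"
  using assms unfolding qunits_def qinv_def by simp (rule someI_ex)

lemma qinv_unique:
  assumes "z \<in> qunits a b" "qmul a b w z = qone"
  shows "w = qinv a b z"
proof -
  have "w = qmul a b w (qmul a b z (qinv a b z))" using qinv_props[OF assms(1)] by simp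
  also have "\<dots> = qinv a b z" using assms(2) by (simp add: qmul_assoc[symmetric])
  finally show ?thesis .
qed

lemma qinv_unit: "z \<in> qunits a b \<Longrightarrow> qinv a b z \<in> qunits a b"
  using qinv_props unfolding qunits_def by blast

lemma qmul_unit:
  assumes "g \<in> qunits a b" "h \<in> qunits a b"
  shows "qmul a b g h \<in> qunits a b"
proof -
  have "qmul a b (qmul a b g h) (qmul a b (qinv a b h) (qinv a b g)) = qone"
    using qinv_props[OF assms(1)] qinv_props[OF assms(2)]
    by (metis qmul_assoc qmul_one_left)
  moreover have "qmul a b (qmul a b (qinv a b h) (qinv a b g)) (qmul a b g h) = qone"
    using qinv_props[OF assms(1)] qinv_props[OF assms(2)]
    by (metis qmul_assoc qmul_one_left)
  ultimately show ?thesis unfolding qunits_def by blast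
qed

lemma qinv_mul:
  assumes "g \<in> qunits a b" "h \<in> qunits a b"
  shows "qinv a b (qmul a b g h) = qmul a b (qinv a b h) (qinv a b g)"
proof -
  have "qmul a b (qmul a b (qinv a b h) (qinv a b g)) (qmul a b g h) = qone"
    using qinv_props[OF assms(1)] qinv_props[OF assms(2)]
    by (metis qmul_assoc qmul_one_left)
  then show ?thesis using qinv_unique[OF qmul_unit[OF assms]] by metis
qed

definition lin :: "'f::field \<times> 'f \<times> 'f \<times> 'f \<Rightarrow> 'f quat \<times> 'f quat \<Rightarrow> 'f quat \<times> 'f quat" where
  "lin g v = (case g of (p,q,r,s) \<Rightarrow>
     (qadd (qscale p (fst v)) (qscale r (snd v)), qadd (qscale q (fst v)) (qscale s (snd v))))"

definition Phi :: "'f::field \<Rightarrow> 'f \<Rightarrow> 'f quat \<Rightarrow> 'f quat \<Rightarrow> 'f quat \<Rightarrow> 'f quat" where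
  "Phi a b g1 g2 x = qmul a b (qmul a b (qinv a b g1) x) g2"

definition mmul :: "'f::field \<times> 'f \<times> 'f \<times> 'f \<Rightarrow> 'f \<times> 'f \<times> 'f \<times> 'f \<Rightarrow> 'f \<times> 'f \<times> 'f \<times> 'f" where
  "mmul h g = (case h of (p,q,r,s) \<Rightarrow> case g of (p',q',r',s') \<Rightarrow>
     (p*p' + q*r', p*q' + q*s', r*p' + s*r', r*q' + s*s'))"

definition minv :: "'f::field \<times> 'f \<times> 'f \<times> 'f \<Rightarrow> 'f \<times> 'f \<times> 'f \<times> 'f" where
  "minv h = (case h of (p,q,r,s) \<Rightarrow> let d = p*s - q*r in (s/d, -q/d, -r/d, p/d))"

lemma act_alt: "act a b v g1 g2 g3 = lin g3 (Phi a b g1 g2 (fst v), Phi a b g1 g2 (snd v))"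
  unfolding act_def lin_def Phi_def by (cases g3) (auto simp: Let_def)

lemma Phi_lin: "(Phi a b g1 g2 (fst (lin g3 v)), Phi a b g1 g2 (snd (lin g3 v)))
   = lin g3 (Phi a b g1 g2 (fst v), Phi a b g1 g2 (snd v))"
  unfolding lin_def Phi_def
  by (cases g3) (auto simp: qmul_add_left qmul_add_right qmul_scale_left qmul_scale_right)

lemma Phi_comp:
  assumes "h1 \<in> qunits a b" "g1 \<in> qunits a b"
  shows "Phi a b g1 g2 (Phi a b h1 h2 x) = Phi a b (qmul a b h1 g1) (qmul a b h2 g2) x"
  unfolding Phi_def qinv_mul[OF assms] by (simp add: qmul_assoc)

lemma lin_comp: "lin g (lin h v) = lin (mmul h g) v"
  unfolding lin_def mmul_def
  by (cases g; cases h; cases v; auto; rename_tac X Y; case_tac X; case_tac Y;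
      simp add: algebra_simps)

lemma act_comp:
  assumes "h1 \<in> qunits a b" "g1 \<in> qunits a b"
  shows "act a b (act a b v h1 h2 h3) g1 g2 g3
         = act a b v (qmul a b h1 g1) (qmul a b h2 g2) (mmul h3 g3)"
  unfolding act_alt
  by (simp add: Phi_lin[simplified] lin_comp Phi_comp[OF assms] del: prod.collapse)

definition mdet :: "'f::field \<times> 'f \<times> 'f \<times> 'f \<Rightarrow> 'f" where
  "mdet h = (case h of (p,q,r,s) \<Rightarrow> p*s - q*r)"

lemma GL2_mdet: "h \<in> GL2 \<longleftrightarrow> mdet h \<noteq> 0"
  unfolding GL2_def mdet_def by (cases h) auto

lemma mdet_mul: "mdet (mmul h g) = mdet h * mdet g"
  unfolding mdet_def mmul_def by (cases h; cases g) (auto simp: algebra_simps)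

lemma mmul_GL2: "h \<in> GL2 \<Longrightarrow> g \<in> GL2 \<Longrightarrow> mmul h g \<in> GL2"
  by (simp add: GL2_mdet mdet_mul)

lemma mmul_assoc: "mmul h (mmul k g) = mmul (mmul h k) g"
  unfolding mmul_def by (cases h; cases g; cases k) (auto simp: algebra_simps)

lemma mmul_id: "mmul (1,0,0,1) g = g"
  unfolding mmul_def by (cases g) auto

lemma div_gen: "u * (v / d) + w * (z / d) = (u*v + w*z) / (d::'a::field)"
  by (simp add: add_divide_distrib)

lemma mmul_minv_id: "h \<in> GL2 \<Longrightarrow> mmul h (minv h) = (1,0,0,1)"
proof (cases h)
  case (fields p q r s)
  assume "h \<in> GL2"
  then have d: "p*s - q*r \<noteq> 0" using fields by (simp add: GL2_def)
  have 1: "p * (s / (p*s - q*r)) + q * (- r / (p*s - q*r)) = 1"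
    unfolding div_gen using d by simp
  have 2: "r * (- q / (p*s - q*r)) + s * (p / (p*s - q*r)) = 1"
    unfolding div_gen using d by (simp add: algebra_simps)
  have 3: "p * (- q / (p*s - q*r)) + q * (p / (p*s - q*r)) = 0"
    by (simp add: algebra_simps)
  have 4: "r * (s / (p*s - q*r)) + s * (- r / (p*s - q*r)) = 0"
    by (simp add: algebra_simps)
  show ?thesis using fields 1 2 3 4 unfolding mmul_def minv_def Let_def by simp
qed

lemma minv_GL2: "h \<in> GL2 \<Longrightarrow> minv h \<in> GL2"
proof -
  assume "h \<in> GL2"
  then have "mdet h * mdet (minv h) = 1"
    using mdet_mul[of h "minv h"] mmul_minv_id[of h] by (simp add: mdet_def)
  then show ?thesis by (auto simp: GL2_mdet)
qed

lemma mmul_minv: "h \<in> GL2 \<Longrightarrow> mmul h (mmul (minv h) g) = g"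
  by (simp add: mmul_assoc mmul_minv_id mmul_id)

lemma orbit_eq:
  assumes "h1 \<in> qunits a b" "h2 \<in> qunits a b" "h3 \<in> GL2" "w = act a b v h1 h2 h3"
  shows "orbit a b w = orbit a b v"
proof
  show "orbit a b w \<subseteq> orbit a b v"
  proof
    fix u assume "u \<in> orbit a b w"
    then obtain g1 g2 g3 where g: "g1 \<in> qunits a b" "g2 \<in> qunits a b" "g3 \<in> GL2"
      "u = act a b w g1 g2 g3" unfolding orbit_def by blast
    then have "u = act a b v (qmul a b h1 g1) (qmul a b h2 g2) (mmul h3 g3)"
      using act_comp assms by metis
    then show "u \<in> orbit a b v" unfolding orbit_def
      using g assms qmul_unit mmul_GL2 by blast
  qed
next
  show "orbit a b v \<subseteq> orbit a b w"
  proof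
    fix u assume "u \<in> orbit a b v"
    then obtain g1 g2 g3 where g: "g1 \<in> qunits a b" "g2 \<in> qunits a b" "g3 \<in> GL2"
      "u = act a b v g1 g2 g3" unfolding orbit_def by blast
    have k: "qmul a b (qinv a b h1) g1 \<in> qunits a b" "qmul a b (qinv a b h2) g2 \<in> qunits a b"
       "mmul (minv h3) g3 \<in> GL2"
      using g assms qmul_unit qinv_unit mmul_GL2 minv_GL2 by blast+
    have "act a b w (qmul a b (qinv a b h1) g1) (qmul a b (qinv a b h2) g2) (mmul (minv h3) g3)
        = act a b v (qmul a b h1 (qmul a b (qinv a b h1) g1)) (qmul a b h2 (qmul a b (qinv a b h2) g2))
             (mmul h3 (mmul (minv h3) g3))"
      using act_comp assms k by metis
    also have "\<dots> = u" using g(4) mmul_minv[OF assms(3)] qinv_props[OF assms(1)]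
        qinv_props[OF assms(2)] by (simp add: qmul_assoc[symmetric])
    finally show "u \<in> orbit a b w" unfolding orbit_def using k by blast
  qed
qed


lemma qconj_conj[simp]: "qconj (qconj x) = x"
  by (cases x) simp

lemma qconj_mul: "qconj (qmul a b x y) = qmul a b (qconj y) (qconj x)"
  by (cases x; cases y) (simp add: algebra_simps)

lemma nrd_Quat: "nrd a b (Quat x0 x1 x2 x3) = x0*x0 - a*x1*x1 - b*x2*x2 + a*b*x3*x3"
  unfolding nrd_def by (simp add: algebra_simps)

lemma mul_conj: "qmul a b z (qconj z) = Quat (nrd a b z) 0 0 0"
  by (cases z) (simp add: nrd_Quat algebra_simps)

lemma conj_mul: "qmul a b (qconj z) z = Quat (nrd a b z) 0 0 0"
  by (cases z) (simp add: nrd_Quat algebra_simps)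

lemma scal_mul_left: "qmul a b (Quat c 0 0 0) y = qscale c y"
  by (cases y) (simp add: algebra_simps)

lemma scal_mul_right: "qmul a b y (Quat c 0 0 0) = qscale c y"
  by (cases y) (simp add: algebra_simps)

lemma qconj_scale: "qconj (qscale c x) = qscale c (qconj x)"
  by (cases x) simp

lemma qscale_scale: "qscale c (qscale d x) = qscale (c*d) x"
  by (cases x) (simp add: algebra_simps)

lemma qscale_one[simp]: "qscale 1 x = x"
  by (cases x) simp

lemma qscale_zero_left[simp]: "qscale 0 x = qzero"
  by (cases x) (simp add: qzero_def)

lemma qadd_zero_left[simp]: "qadd qzero x = x"
  by (cases x) (simp add: qzero_def)

lemma qadd_zero_right[simp]: "qadd x qzero = x"
  by (cases x) (simp add: qzero_def)

lemma aniso: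
  assumes "is_division a b" "nrd a b z = 0"
  shows "z = qzero"
proof (rule ccontr)
  assume "z \<noteq> qzero"
  then obtain w where w: "qmul a b w z = qone" using assms(1) unfolding is_division_def by blast
  have "qconj z = qmul a b (qmul a b w z) (qconj z)" using w by simp
  also have "\<dots> = qmul a b w (Quat 0 0 0 0)" using assms(2) by (simp add: qmul_assoc mul_conj)
  also have "\<dots> = qzero" by (simp add: qzero_def[symmetric])
  finally have "qconj z = qzero" .
  then have "z = qzero" by (cases z) (simp add: qzero_def)
  with \<open>z \<noteq> qzero\<close> show False by simp
qed

lemma unit_of_nonzero: "is_division a b \<Longrightarrow> z \<noteq> qzero \<Longrightarrow> z \<in> qunits a b"
  unfolding is_division_def qunits_def by blast

lemma one_unit: "qone \<in> qunits a b"
  unfolding qunits_def using qmul_one_left[of a b qone] by blast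

lemma qinv_one: "qinv a b qone = qone"
  by (metis one_unit qinv_unique qmul_one_left)

lemma P_scalar:
  fixes a b :: "'f::field"
  assumes "(2::'f) \<noteq> 0" "is_division a b" "Pform a b (x, y) = 0"
  shows "qmul a b x (qconj y) = Quat (scalar_part (qmul a b x (qconj y))) 0 0 0"
proof -
  obtain z0 z1 z2 z3 where z: "qmul a b x (qconj y) = Quat z0 z1 z2 z3"
    by (cases "qmul a b x (qconj y)")
  have yx: "qmul a b y (qconj x) = Quat z0 (-z1) (-z2) (-z3)"
    using arg_cong[OF z, of qconj] by (simp add: qconj_mul)
  have "nrd a b (Quat 0 (2*z1) (2*z2) (2*z3)) = 0"
    using assms(3) z yx unfolding Pform_def by (simp add: algebra_simps)
  then have "Quat 0 (2*z1) (2*z2) (2*z3) = qzero" using aniso assms(2) by blast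
  then have "z1 = 0" "z2 = 0" "z3 = 0" using assms(1) by (auto simp: qzero_def)
  then show ?thesis using z by simp
qed

lemma orbit_zero: fixes a b :: "'f::field" shows "orbit a b (qzero, qzero) = {(qzero, qzero)}"
proof -
  have "act a b (qzero, qzero) g1 g2 g3 = (qzero, qzero)" for g1 g2 g3
    unfolding act_def by (cases g3) (simp add: Let_def)
  moreover have "act a b (qzero, qzero) qone qone (1,0,0,1) = (qzero, qzero)"
    unfolding act_def by (simp add: Let_def)
  moreover have "(1::'f,0::'f,0::'f,1::'f) \<in> GL2" by (simp add: GL2_def)
  ultimately show ?thesis unfolding orbit_def using one_unit[of a b] by auto
qed

lemma in_orbit_one: fixes a b :: "'f::field" shows "(qzero, qone) \<in> orbit a b (qzero, qone)"
proof -
  have "act a b (qzero, qone) qone qone (1,0,0,1) = (qzero, qone)"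
    unfolding act_def by (simp add: Let_def qinv_one)
  moreover have "(1::'f,0::'f,0::'f,1::'f) \<in> GL2" by (simp add: GL2_def)
  ultimately show ?thesis unfolding orbit_def using one_unit[of a b] by force
qed

lemma singular_orbit:
  fixes a b :: "'f::field"
  assumes "(2::'f) \<noteq> 0" "is_division a b" "Pform a b v = 0"
  shows "orbit a b v = orbit a b (qzero, qzero) \<or> orbit a b v = orbit a b (qzero, qone)"
proof -
  obtain x y where v: "v = (x, y)" by (cases v)
  show ?thesis
  proof (cases "x = qzero")
    case True
    show ?thesis
    proof (cases "y = qzero")
      case True
      then show ?thesis using v \<open>x = qzero\<close> by simp
    next
      case False
      have u: "y \<in> qunits a b" using unit_of_nonzero[OF assms(2) False] .
      have "(qzero, qone) = act a b v y qone (1,0,0,1)"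
        unfolding act_def v using qinv_props[OF u] \<open>x = qzero\<close>
        by (simp add: Let_def qscale_one)
      then have "orbit a b (qzero, qone) = orbit a b v"
        using orbit_eq[OF u one_unit] by (simp add: GL2_def)
      then show ?thesis by simp
    qed
  next
    case False
    have u: "x \<in> qunits a b" using unit_of_nonzero[OF assms(2) False] .
    define c where "c = scalar_part (qmul a b x (qconj y))"
    have w: "qmul a b x (qconj y) = Quat c 0 0 0"
      using P_scalar[OF assms(1,2)] assms(3) v c_def by simp
    define n where "n = nrd a b x"
    have n0: "n \<noteq> 0" using aniso[OF assms(2), of x] False n_def by metis
    have "qscale c (qconj x) = qmul a b (qconj x) (qmul a b x (qconj y))"
      by (simp add: w scal_mul_right)
    also have "\<dots> = qscale n (qconj y)"
      by (simp add: qmul_assoc[symmetric] conj_mul scal_mul_left n_def)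
    finally have eq: "qscale c (qconj x) = qscale n (qconj y)" .
    have "qconj y = qscale (1/n) (qscale n (qconj y))" using n0 by (simp add: qscale_scale)
    also have "\<dots> = qscale (1/n) (qscale c (qconj x))" using eq by simp
    also have "\<dots> = qscale (c/n) (qconj x)" by (simp add: qscale_scale)
    finally have "qconj y = qscale (c/n) (qconj x)" .
    then have yx: "y = qscale (c/n) x"
      using arg_cong[of _ _ qconj] by (metis qconj_conj qconj_scale)
    define t where "t = c/n"
    have "qmul a b (qmul a b (qinv a b x) y) qone = qscale t qone"
      using qinv_props[OF u] by (simp add: yx t_def qmul_scale_right)
    moreover have "qmul a b (qmul a b (qinv a b x) x) qone = qone"
      using qinv_props[OF u] by simp
    ultimately have "act a b v x qone (-t,1,1,0) = (qzero, qone)"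
      unfolding act_def v by (simp add: Let_def qzero_def qone_def)
    moreover have g: "(-t,1,1,0) \<in> GL2" by (simp add: GL2_def)
    ultimately have "orbit a b (qzero, qone) = orbit a b v"
      using orbit_eq[OF u one_unit g, of "(qzero, qone)" v] by simp
    then show ?thesis by simp
  qed
qed

theorem proposition2p2:
  fixes a b :: "'f::field"
  assumes "(2::'f) \<noteq> 0"
    and "a \<noteq> 0" and "b \<noteq> 0"
    and "is_division a b"
  shows "{orbit a b v | v. Pform a b v = 0}
           = {orbit a b (qzero, qzero), orbit a b (qzero, qone)}
       \<and> orbit a b (qzero, qzero) \<noteq> orbit a b (qzero, qone)"
proof
  have p0: "Pform a b (qzero, qzero) = 0"
    unfolding Pform_def nrd_def by (simp add: qzero_def)
  have p1: "Pform a b (qzero, qone) = 0"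
    unfolding Pform_def nrd_def by (simp add: qzero_def qone_def)
  show "{orbit a b v | v. Pform a b v = 0}
           = {orbit a b (qzero, qzero), orbit a b (qzero, qone)}"
    using singular_orbit[OF assms(1,4)] p0 p1 by blast
  show "orbit a b (qzero, qzero) \<noteq> orbit a b (qzero, qone)"
  proof
    assume "orbit a b (qzero, qzero) = orbit a b (qzero, qone)"
    then have "(qzero, qone) \<in> orbit a b (qzero, qzero)"
      using in_orbit_one[of a b] by simp
    then have "(qone :: 'f quat) = qzero"
      unfolding orbit_zero[of a b] by simp
    then show False by (simp add: qzero_def qone_def)
  qed
qed

end
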